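(* Let $|a|>2$ and let $\langle z_0\rangle$ be a bitransitive attracting cycle of $B_a(z)=z^3\frac{z-a}{1-\bar a z}$, i.e. an attracting cycle whose immediate basin contains both free critical points $c_+$ and $c_-$ in different connected components. Then the multiplier of $\langle z_0\rangle$ is a non-negative real number.
   Context: For $|a|>2$ the free critical points of $B_a$ are $c_\pm=\frac{a}{3|a|^2}\left(2+|a|^2\pm\sqrt{(|a|^2-4)(|a|^2-1)}\right)$, which are mirror images of each other under $z\mapsto1/\bar z$. *)

theory Defs
  imports "HOL-Analysis.Analysis"
begin

definition blaschke :: "complex \<Rightarrow> complex \<Rightarrow> complex" where
  "blaschke a z = z ^ 3 * (z - a) / (1 - cnj a * z)"

definition exact_period :: "(complex \<Rightarrow> complex) \<Rightarrow> complex \<Rightarrow> nat \<Rightarrow> bool" where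
  "exact_period f z0 n \<longleftrightarrow> n > 0 \<and> (f ^^ n) z0 = z0 \<and> (\<forall>m. 0 < m \<and> m < n \<longrightarrow> (f ^^ m) z0 \<noteq> z0)"

definition cycle_of :: "(complex \<Rightarrow> complex) \<Rightarrow> complex \<Rightarrow> nat \<Rightarrow> complex set" where
  "cycle_of f z0 n = {(f ^^ k) z0 | k. k < n}"

definition multiplier :: "(complex \<Rightarrow> complex) \<Rightarrow> complex \<Rightarrow> nat \<Rightarrow> complex" where
  "multiplier f z0 n = deriv (f ^^ n) z0"

definition basin :: "complex \<Rightarrow> complex \<Rightarrow> nat \<Rightarrow> complex set" where
  "basin a z0 n = {z. (\<forall>m. 1 - cnj a * ((blaschke a ^^ m) z) \<noteq> 0) \<and>
      (\<lambda>m. infdist ((blaschke a ^^ m) z) (cycle_of (blaschke a) z0 n)) \<longlonglongrightarrow> 0}"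

definition immediate_basin :: "complex \<Rightarrow> complex \<Rightarrow> nat \<Rightarrow> complex set" where
  "immediate_basin a z0 n =
     (\<Union>w\<in>cycle_of (blaschke a) z0 n. connected_component_set (basin a z0 n) w)"

definition crit_plus :: "complex \<Rightarrow> complex" where
  "crit_plus a = a / complex_of_real (3 * (cmod a)^2) *
     complex_of_real (2 + (cmod a)^2 + sqrt (((cmod a)^2 - 4) * ((cmod a)^2 - 1)))"

definition crit_minus :: "complex \<Rightarrow> complex" where
  "crit_minus a = a / complex_of_real (3 * (cmod a)^2) *
     complex_of_real (2 + (cmod a)^2 - sqrt (((cmod a)^2 - 4) * ((cmod a)^2 - 1)))"

end

theory Submission
  imports Defs
begin


definition tau :: "complex \<Rightarrow> complex" where "tau z = inverse (cnj z)"

lemma tau_tau[simp]: "tau (tau z) = z" by (simp add: tau_def)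

lemma blaschke_tau: "blaschke a (tau z) = tau (blaschke a z)"
proof (cases "z = 0")
  case True thus ?thesis by (simp add: tau_def blaschke_def)
next
  case z: False
  show ?thesis
  proof (cases "z = a")
    case True thus ?thesis using z
      by (simp add: tau_def blaschke_def complex_cnj_divide field_simps)
  next
    case za: False
    show ?thesis
    proof (cases "1 - cnj a * z = 0")
      case True
      then have "cnj z = 1 / a" using z
        by (metis complex_cnj_cnj complex_cnj_mult complex_cnj_one complex_cnj_diff eq_iff_diff_eq_0 mult.commute nonzero_divide_eq_eq one_neq_zero mult_zero_right)
      then have "tau z = a" by (simp add: tau_def)
      thus ?thesis using True by (simp add: tau_def blaschke_def)
    next
      case p: False
      have a1: "cnj z - cnj a \<noteq> 0" using za
        by (metis complex_cnj_cancel_iff eq_iff_diff_eq_0)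
      have a2: "1 - a * cnj z \<noteq> 0" using p
        by (metis complex_cnj_cnj complex_cnj_diff complex_cnj_mult complex_cnj_one complex_cnj_zero mult.commute)
      show ?thesis using z a1 a2 p
        by (simp add: tau_def blaschke_def complex_cnj_divide field_simps)
    qed
  qed
qed

lemma funpow_tau: "(blaschke a ^^ m) (tau z) = tau ((blaschke a ^^ m) z)"
  by (induction m) (auto simp: blaschke_tau)


lemma crit_tau:
  assumes "cmod a > 2"
  shows "crit_minus a = tau (crit_plus a)" "crit_plus a \<noteq> 0"
proof -
  define r where "r = cmod a"
  define s where "s = sqrt ((r^2 - 4) * (r^2 - 1))"
  have r2: "r > 2" using assms r_def by simp
  have X: "(r^2 - 4) * (r^2 - 1) \<ge> 0" using r2
  proof (intro mult_nonneg_nonneg)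
    have "r^2 \<ge> 2^2" using r2 by (intro power_mono) auto
    thus "r^2 - 4 \<ge> 0" "r^2 - 1 \<ge> 0" by auto
  qed
  have ss: "s^2 = (r^2 - 4) * (r^2 - 1)" by (metis X real_sqrt_pow2 s_def)
  have s0: "s \<ge> 0" unfolding s_def by (rule real_sqrt_ge_zero[OF X])
  have pp: "2 + r^2 + s > 0" using s0 by (simp add: add_pos_nonneg)
  have prod: "(2 + r^2 + s) * (2 + r^2 - s) = 9 * r^2"
    using ss by (simp add: algebra_simps power2_eq_square) 
  have a0: "a \<noteq> 0" using assms by auto
  have aa: "a * cnj a = complex_of_real (r^2)" using r_def complex_norm_square by (simp add: mult.commute)
  have cp: "crit_plus a = a * complex_of_real ((2 + r^2 + s) / (3 * r^2))"
    unfolding crit_plus_def r_def s_def by simp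
  have cm: "crit_minus a = a * complex_of_real ((2 + r^2 - s) / (3 * r^2))"
    unfolding crit_minus_def r_def s_def by simp
  have nz: "(2 + r^2 + s) / (3 * r^2) \<noteq> 0" using pp r2 by simp
  show "crit_plus a \<noteq> 0" using cp a0 nz by (metis mult_eq_0_iff of_real_eq_0_iff)
  have "(2 + r^2 - s) / (3 * r^2) = 3 / (2 + r^2 + s)"
    using prod pp r2 by (simp add: field_simps)
  hence cm2: "crit_minus a = a * complex_of_real (3 / (2 + r^2 + s))" using cm by simp
  have "tau (crit_plus a) = inverse (cnj a) * complex_of_real ((3 * r^2) / (2 + r^2 + s))"
  proof -
    have "cnj (crit_plus a) = cnj a * complex_of_real ((2 + r^2 + s) / (3 * r^2))"
      using cp by simp
    hence "tau (crit_plus a) = inverse (cnj a) * inverse (complex_of_real ((2 + r^2 + s) / (3 * r^2)))"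
      unfolding tau_def by (simp only: inverse_mult_distrib)
    moreover have "inverse ((2 + r^2 + s) / (3 * r^2)) = (3 * r^2) / (2 + r^2 + s)" by simp
    ultimately show ?thesis by (metis of_real_inverse)
  qed
  also have "inverse (cnj a) = a / complex_of_real (r^2)" using aa a0 r2
    by (simp add: field_simps)
  finally show "crit_minus a = tau (crit_plus a)" using cm2 r2 pp
    by (simp add: field_simps)
qed



lemma blaschke_0[simp]: "blaschke a 0 = 0" by (simp add: blaschke_def)
lemma funpow_blaschke_0[simp]: "(blaschke a ^^ m) 0 = 0" by (induction m) auto
lemma blaschke_a[simp]: "blaschke a a = 0" by (simp add: blaschke_def)
lemma blaschke_pole: "1 - cnj a * z = 0 \<Longrightarrow> blaschke a z = 0" by (simp add: blaschke_def)

lemma period_mod: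
  assumes "exact_period f z0 n"
  shows "(f ^^ k) z0 = (f ^^ (k mod n)) z0"
proof -
  have fx: "(f ^^ n) z0 = z0" using assms by (simp add: exact_period_def)
  have q: "(f ^^ (q * n)) z0 = z0" for q
  proof (induction q)
    case (Suc q)
    have "(f ^^ (Suc q * n)) z0 = (f ^^ n) ((f ^^ (q * n)) z0)"
      by (simp add: funpow_add)
    thus ?case using Suc fx by simp
  qed simp
  have e: "k = k mod n + (k div n) * n" by simp
  have "(f ^^ (k mod n + (k div n) * n)) z0 = (f ^^ (k mod n)) ((f ^^ ((k div n) * n)) z0)"
    by (simp only: funpow_add o_apply)
  hence "(f ^^ k) z0 = (f ^^ (k mod n)) ((f ^^ ((k div n) * n)) z0)"
    using e by metis
  thus ?thesis using q by simp
qed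

lemma in_cycle:
  assumes "exact_period f z0 n"
  shows "(f ^^ k) z0 \<in> cycle_of f z0 n"
proof -
  have "n > 0" using assms by (simp add: exact_period_def)
  hence "k mod n < n" by simp
  thus ?thesis using period_mod[OF assms, of k] unfolding cycle_of_def by blast
qed

lemma cycle_finite: "finite (cycle_of f z0 n)"
  unfolding cycle_of_def by simp

lemma cycle_ne: "exact_period f z0 n \<Longrightarrow> z0 \<in> cycle_of f z0 n"
  unfolding cycle_of_def exact_period_def by (auto intro!: exI[of _ 0])

lemma cycle_no0:
  assumes "exact_period (blaschke a) z0 n" "z0 \<noteq> 0"
  shows "0 \<notin> cycle_of (blaschke a) z0 n"
proof
  assume "0 \<in> cycle_of (blaschke a) z0 n"
  then obtain k where k: "k < n" "(blaschke a ^^ k) z0 = 0" unfolding cycle_of_def by auto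
  have e: "n = (n - k) + k" using k by simp
  have "(blaschke a ^^ ((n - k) + k)) z0 = (blaschke a ^^ (n - k)) ((blaschke a ^^ k) z0)"
    by (simp only: funpow_add o_apply)
  hence "(blaschke a ^^ n) z0 = (blaschke a ^^ (n - k)) ((blaschke a ^^ k) z0)"
    using e by metis
  thus False using k assms by (simp add: exact_period_def)
qed

lemma basin_no0:
  assumes "z \<in> basin a z0 n" "0 \<notin> cycle_of (blaschke a) z0 n" "exact_period (blaschke a) z0 n"
  shows "(blaschke a ^^ m) z \<noteq> 0"
proof
  assume h: "(blaschke a ^^ m) z = 0"
  define C where "C = cycle_of (blaschke a) z0 n"
  have ev: "\<forall>j\<ge>m. infdist ((blaschke a ^^ j) z) C = infdist 0 C"
  proof (intro allI impI)
    fix j assume "j \<ge> m"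
    then have e: "j = (j - m) + m" by simp
    have "(blaschke a ^^ ((j - m) + m)) z = (blaschke a ^^ (j - m)) ((blaschke a ^^ m) z)"
      by (simp only: funpow_add o_apply)
    then have "(blaschke a ^^ j) z = (blaschke a ^^ (j - m)) ((blaschke a ^^ m) z)"
      using e by metis
    thus "infdist ((blaschke a ^^ j) z) C = infdist 0 C" using h by simp
  qed
  have l: "(\<lambda>j. infdist ((blaschke a ^^ j) z) C) \<longlonglongrightarrow> 0" using assms(1) C_def basin_def by auto
  have "(\<lambda>j. infdist ((blaschke a ^^ j) z) C) \<longlonglongrightarrow> infdist 0 C"
    using ev by (intro tendsto_eventually) (auto simp: eventually_sequentially)
  then have "infdist 0 C = 0" using l LIMSEQ_unique by blast
  moreover have "closed C" using cycle_finite C_def finite_imp_closed by blast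
  moreover have "C \<noteq> {}" using cycle_ne[OF assms(3)] C_def by auto
  ultimately show False using assms(2) C_def in_closed_iff_infdist_zero by blast
qed

lemma basin_no_a:
  assumes "z \<in> basin a z0 n" "0 \<notin> cycle_of (blaschke a) z0 n" "exact_period (blaschke a) z0 n"
  shows "(blaschke a ^^ m) z \<noteq> a"
  using basin_no0[OF assms, of "Suc m"] by auto




lemma nearest:
  fixes C :: "complex set"
  assumes "finite C" "C \<noteq> {}"
  obtains p where "p \<in> C" "infdist y C = dist y p"
  using infdist_attains_inf[OF finite_imp_closed[OF assms(1)] assms(2)] by blast

lemma L1:
  fixes C :: "complex set"
  assumes "finite C" "C \<noteq> {}" "0 \<notin> C" "(\<lambda>m. infdist (x m) C) \<longlonglongrightarrow> 0"
  shows "(\<lambda>m. infdist (tau (x m)) (tau ` C)) \<longlonglongrightarrow> 0"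
proof -
  define r where "r = Min (cmod ` C)"
  have rC: "\<And>p. p \<in> C \<Longrightarrow> r \<le> cmod p" using assms(1) r_def by simp
  have "r \<in> cmod ` C" using assms(1,2) r_def by simp
  hence r0: "r > 0" using assms(3) by auto
  have ev: "eventually (\<lambda>m. infdist (x m) C < r/2) sequentially"
    using order_tendstoD(2)[OF assms(4), of "r/2"] r0 by simp
  have bnd: "eventually (\<lambda>m. infdist (tau (x m)) (tau ` C) \<le> (2 / r^2) * infdist (x m) C) sequentially"
    using ev
  proof eventually_elim
    case (elim m)
    obtain p where p: "p \<in> C" "infdist (x m) C = dist (x m) p" using nearest assms(1,2) by blast
    have cp: "cmod p \<ge> r" using rC p by simp
    have d: "cmod (x m - p) < r/2" using elim p by (simp add: dist_norm)
    have cx: "cmod (x m) \<ge> r/2"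
      using norm_triangle_ineq2[of p "x m"] d cp by (simp add: norm_minus_commute)
    have xz: "x m \<noteq> 0" using cx r0 by auto
    have pz: "p \<noteq> 0" using cp r0 by auto
    have eq: "tau (x m) - tau p = (cnj p - cnj (x m)) / (cnj (x m) * cnj p)"
      using xz pz by (simp add: tau_def field_simps)
    have "cmod (tau (x m) - tau p) = cmod (x m - p) / (cmod (x m) * cmod p)"
      unfolding eq by (simp add: norm_mult norm_divide norm_minus_commute flip: complex_cnj_diff)
    also have "\<dots> \<le> cmod (x m - p) / ((r/2) * r)"
    proof (rule divide_left_mono)
      show "r / 2 * r \<le> cmod (x m) * cmod p" using cx cp r0 by (intro mult_mono) auto
      have "0 < r / 2 * r" using r0 by simp
      moreover have "0 < cmod (x m) * cmod p" using xz pz by simp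
      ultimately show "0 < cmod (x m) * cmod p * (r / 2 * r)" by simp
    qed simp
    also have "\<dots> = (2 / r^2) * cmod (x m - p)" by (simp add: power2_eq_square field_simps)
    finally have "cmod (tau (x m) - tau p) \<le> (2 / r^2) * cmod (x m - p)" .
    moreover have "infdist (tau (x m)) (tau ` C) \<le> dist (tau (x m)) (tau p)"
      using p by (intro infdist_le) auto
    ultimately show ?case using p by (simp add: dist_norm)
  qed
  have "(\<lambda>m. (2 / r^2) * infdist (x m) C) \<longlonglongrightarrow> 0"
    using tendsto_mult_right_zero[OF assms(4), of "2 / r^2"] by (simp only:)
  note lim = this
  show ?thesis
  proof (rule tendsto_sandwich[of "\<lambda>_. 0" _ _ "\<lambda>m. (2 / r^2) * infdist (x m) C"])
    show "eventually (\<lambda>m. 0 \<le> infdist (tau (x m)) (tau ` C)) sequentially"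
      by (simp add: infdist_nonneg)
  qed (use bnd lim in auto)
qed

lemma L2:
  fixes A B :: "complex set"
  assumes "finite A" "A \<noteq> {}" "finite B" "B \<noteq> {}"
    "(\<lambda>m. infdist (y m) A) \<longlonglongrightarrow> 0" "(\<lambda>m. infdist (y m) B) \<longlonglongrightarrow> 0"
  shows "A \<inter> B \<noteq> {}"
proof
  assume dis: "A \<inter> B = {}"
  define D where "D = (\<lambda>(a, b). dist a b) ` (A \<times> B)"
  define \<delta> where "\<delta> = Min D"
  have fD: "finite D" "D \<noteq> {}" using assms(1-4) D_def by auto
  have "\<delta> \<in> D" using fD \<delta>_def by simp
  hence d0: "\<delta> > 0" using dis D_def by auto
  have low: "\<delta> \<le> infdist (y m) A + infdist (y m) B" for m
  proof -
    obtain p where p: "p \<in> A" "infdist (y m) A = dist (y m) p" using nearest assms(1,2) by blast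
    obtain q where q: "q \<in> B" "infdist (y m) B = dist (y m) q" using nearest assms(3,4) by blast
    have "(p, q) \<in> A \<times> B" using p q by simp
    hence "dist p q \<in> D" unfolding D_def by (metis (no_types) case_prod_conv image_eqI)
    hence "\<delta> \<le> dist p q" using fD \<delta>_def by simp
    also have "\<dots> \<le> dist (y m) p + dist (y m) q" by (simp add: dist_triangle3)
    finally show ?thesis using p q by simp
  qed
  have "(\<lambda>m. infdist (y m) A + infdist (y m) B) \<longlonglongrightarrow> 0"
    using tendsto_add[OF assms(5,6)] by simp
  then have "eventually (\<lambda>m. infdist (y m) A + infdist (y m) B < \<delta>) sequentially"
    using d0 by (simp add: order_tendstoD(2))
  then obtain m where "infdist (y m) A + infdist (y m) B < \<delta>" by (auto simp: eventually_sequentially)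
  thus False using low[of m] by simp
qed




lemma basin_tau:
  assumes ep: "exact_period (blaschke a) z0 n"
    and c0: "0 \<notin> cycle_of (blaschke a) z0 n"
    and tc: "tau ` cycle_of (blaschke a) z0 n = cycle_of (blaschke a) z0 n"
    and z: "z \<in> basin a z0 n"
  shows "tau z \<in> basin a z0 n"
proof -
  define C where "C = cycle_of (blaschke a) z0 n"
  have pole: "1 - cnj a * ((blaschke a ^^ m) (tau z)) \<noteq> 0" for m
  proof
    assume h: "1 - cnj a * ((blaschke a ^^ m) (tau z)) = 0"
    define y where "y = (blaschke a ^^ m) z"
    have y0: "y \<noteq> 0" using basin_no0[OF z c0 ep] y_def by simp
    have ya: "y \<noteq> a" using basin_no_a[OF z c0 ep] y_def by simp
    have "cnj a * inverse (cnj y) = 1" using h funpow_tau[of m a z] y_def by (simp add: tau_def)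
    hence "cnj a = cnj y" using y0 by (simp add: field_simps)
    thus False using ya by simp
  qed
  have l: "(\<lambda>m. infdist ((blaschke a ^^ m) z) C) \<longlonglongrightarrow> 0" using z C_def basin_def by auto
  have "(\<lambda>m. infdist (tau ((blaschke a ^^ m) z)) (tau ` C)) \<longlonglongrightarrow> 0"
    using L1[OF _ _ _ l] cycle_finite cycle_ne[OF ep] c0 C_def by blast
  hence "(\<lambda>m. infdist ((blaschke a ^^ m) (tau z)) C) \<longlonglongrightarrow> 0"
    using tc C_def by (simp add: funpow_tau)
  thus ?thesis using pole C_def basin_def by auto
qed

lemma blaschke_diff:
  assumes "1 - cnj a * z \<noteq> 0"
  shows "blaschke a field_differentiable at z"
  unfolding blaschke_def[abs_def] using assms by (auto intro!: derivative_intros)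

lemma iter_diff:
  assumes "\<And>j. 1 - cnj a * (blaschke a ^^ j) z \<noteq> 0"
  shows "(blaschke a ^^ m) field_differentiable at z"
proof (induction m)
  case 0 show ?case by (simp add: field_differentiable_ident id_def)
next
  case (Suc m)
  have "(blaschke a \<circ> (blaschke a ^^ m)) field_differentiable at z"
    by (rule field_differentiable_compose[OF Suc blaschke_diff[OF assms]])
  thus ?case by (simp add: o_def)
qed

lemma blaschke_deriv0: "deriv (blaschke a) 0 = 0"
proof -
  have "((\<lambda>z. z ^ 3 * (z - a) / (1 - cnj a * z)) has_field_derivative 0) (at 0)"
    by (rule derivative_eq_intros refl | simp)+
  thus ?thesis unfolding blaschke_def[abs_def] by (rule DERIV_imp_deriv)
qed




lemma conj_mult:
  fixes g :: "complex \<Rightarrow> complex"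
  assumes comm: "\<And>z. g (tau z) = tau (g z)"
    and dz: "g field_differentiable at z0" and dw: "g field_differentiable at (tau z0)"
    and z0: "z0 \<noteq> 0" and gz: "g z0 = tau z0"
  shows "deriv g (g z0) * deriv g z0 = complex_of_real ((cmod (deriv g z0))^2 * (cmod z0)^4)"
proof -
  define E where "E = deriv g z0"
  define D where "D = deriv g (tau z0)"
  have hE: "(g has_field_derivative E) (at z0)" using dz E_def DERIV_deriv_iff_field_differentiable by blast
  have hD: "(g has_field_derivative D) (at (tau z0))" using dw D_def DERIV_deriv_iff_field_differentiable by blast
  have ct: "cnj (inverse z0) = tau z0" by (simp add: tau_def)
  have h1: "((cnj \<circ> g \<circ> cnj) has_field_derivative cnj D) (at (inverse z0))"
    by (rule has_field_derivative_cnj_cnj) (use hD ct in simp)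
  have h2: "((cnj \<circ> g \<circ> cnj) \<circ> inverse has_field_derivative cnj D * (- (inverse z0 ^ Suc (Suc 0)))) (at z0)"
    by (rule DERIV_chain[OF h1 DERIV_inverse[OF z0]])
  have feq: "(cnj \<circ> g \<circ> cnj) \<circ> inverse = (\<lambda>z. inverse (g z))"
  proof
    fix z
    have "cnj (inverse z) = tau z" by (simp add: tau_def)
    thus "((cnj \<circ> g \<circ> cnj) \<circ> inverse) z = inverse (g z)"
      using comm[of z] by (simp add: tau_def)
  qed
  have gz0: "g z0 \<noteq> 0" using gz z0 by (simp add: tau_def)
  have h3: "((\<lambda>z. inverse (g z)) has_field_derivative - (E * inverse (g z0 ^ Suc (Suc 0)))) (at z0)"
    by (rule DERIV_inverse_fun[OF hE gz0])
  have eq: "cnj D * (- (inverse z0 ^ Suc (Suc 0))) = - (E * inverse (g z0 ^ Suc (Suc 0)))"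
    using DERIV_unique[OF h2[unfolded feq] h3] .
  have "inverse (g z0 ^ Suc (Suc 0)) = cnj z0 ^ 2" using gz by (simp add: tau_def power_inverse power2_eq_square)
  hence "cnj D * inverse (z0 ^ 2) = E * cnj z0 ^ 2" using eq by (simp add: power_inverse power2_eq_square)
  hence c1: "cnj D = E * (cnj z0 ^ 2 * z0 ^ 2)" using z0 by (simp add: field_simps)
  have c2: "cnj z0 ^ 2 * z0 ^ 2 = complex_of_real ((cmod z0)^4)"
  proof -
    have "z0 * cnj z0 = complex_of_real ((cmod z0)^2)" using complex_norm_square by metis
    hence "(z0 * cnj z0)^2 = complex_of_real ((cmod z0)^4)" by simp
    thus ?thesis by (simp add: power_mult_distrib mult.commute)
  qed
  have "cnj D = E * complex_of_real ((cmod z0)^4)" using c1 c2 by simp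
  hence "D = cnj E * complex_of_real ((cmod z0)^4)" by (metis complex_cnj_cnj complex_cnj_mult complex_cnj_complex_of_real)
  hence "D * E = (E * cnj E) * complex_of_real ((cmod z0)^4)" by (simp add: mult_ac)
  also have "E * cnj E = complex_of_real ((cmod E)^2)" using complex_norm_square by metis
  finally have "D * E = complex_of_real ((cmod E)^2 * (cmod z0)^4)" by simp
  thus ?thesis using gz D_def E_def by simp
qed




lemma polefree:
  assumes ep: "exact_period (blaschke a) z0 n" and z0: "z0 \<noteq> 0"
  shows "1 - cnj a * (blaschke a ^^ j) z0 \<noteq> 0"
proof
  assume "1 - cnj a * (blaschke a ^^ j) z0 = 0"
  hence "(blaschke a ^^ Suc j) z0 = 0" using blaschke_pole by simp
  thus False using in_cycle[OF ep, of "Suc j"] cycle_no0[OF ep z0] by simp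
qed

theorem mainTheorem16:
  fixes a z0 :: complex and n :: nat
  assumes "cmod a > 2"
    and "exact_period (blaschke a) z0 n"
    and "cmod (multiplier (blaschke a) z0 n) < 1"
    and "crit_plus a \<in> immediate_basin a z0 n"
    and "crit_minus a \<in> immediate_basin a z0 n"
    and "connected_component_set (basin a z0 n) (crit_plus a)
           \<noteq> connected_component_set (basin a z0 n) (crit_minus a)"
  shows "multiplier (blaschke a) z0 n \<in> \<real> \<and> Re (multiplier (blaschke a) z0 n) \<ge> 0"
proof (cases "z0 = 0")
  case True
  have n0: "n > 0" using assms(2) by (simp add: exact_period_def)
  then obtain n' where n': "n = Suc n'" by (cases n) auto
  have d1: "blaschke a field_differentiable at 0" by (rule blaschke_diff) simp
  have d2: "(blaschke a ^^ n') field_differentiable at (blaschke a 0)"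
    by (simp, rule iter_diff) simp
  have "multiplier (blaschke a) z0 n = deriv ((blaschke a ^^ n') \<circ> blaschke a) 0"
    unfolding multiplier_def True n' funpow_Suc_right ..
  also have "\<dots> = 0" using deriv_chain[OF d1 d2] blaschke_deriv0 by simp
  finally show ?thesis by simp
next
  case z0: False
  note ep = assms(2)
  define B where "B = blaschke a"
  define C where "C = cycle_of B z0 n"
  define S where "S = basin a z0 n"
  define cp where "cp = crit_plus a"
  define cm where "cm = crit_minus a"
  have c0: "0 \<notin> C" using cycle_no0[OF ep z0] C_def B_def by simp
  have fC: "finite C" using cycle_finite C_def by simp
  have neC: "C \<noteq> {}" using cycle_ne[OF ep] C_def B_def by auto
  have cmtau: "cm = tau cp" using crit_tau[OF assms(1)] cm_def cp_def by simp
  obtain w where w: "w \<in> C" "cp \<in> connected_component_set S w"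
    using assms(4) unfolding immediate_basin_def C_def S_def cp_def B_def by blast
  have cpS: "cp \<in> S" using w(2) connected_component_subset by blast
  have cmS: "cm \<in> S" using assms(5) connected_component_subset
    unfolding immediate_basin_def S_def cm_def by blast
  have lx: "(\<lambda>m. infdist ((B ^^ m) cp) C) \<longlonglongrightarrow> 0"
    using cpS unfolding S_def basin_def C_def B_def by simp
  have ly: "(\<lambda>m. infdist (tau ((B ^^ m) cp)) C) \<longlonglongrightarrow> 0"
    using cmS unfolding S_def basin_def C_def B_def cmtau by (simp add: funpow_tau)
  have ly2: "(\<lambda>m. infdist (tau ((B ^^ m) cp)) (tau ` C)) \<longlonglongrightarrow> 0"
    by (rule L1[OF fC neC c0 lx])
  have "C \<inter> tau ` C \<noteq> {}" by (rule L2[OF fC neC _ _ ly ly2]) (use fC neC in auto)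
  then obtain i j where ij: "i < n" "j < n" "tau ((B ^^ i) z0) = (B ^^ j) z0"
    unfolding C_def cycle_of_def by auto
  have fx: "(B ^^ n) z0 = z0" using ep B_def by (simp add: exact_period_def)
  have "tau z0 = tau ((B ^^ ((n - i) + i)) z0)" using fx ij by simp
  also have "\<dots> = (B ^^ (n - i)) (tau ((B ^^ i) z0))"
    by (simp only: funpow_add o_apply B_def funpow_tau)
  also have "\<dots> = (B ^^ ((n - i) + j)) z0" using ij(3) by (simp only: funpow_add o_apply)
  finally have "tau z0 = (B ^^ ((n - i + j) mod n)) z0"
    using period_mod[OF ep] B_def by simp
  then obtain k where k: "k < n" "tau z0 = (B ^^ k) z0"
    using ep by (metis exact_period_def mod_less_divisor)
  have "z0 = tau ((B ^^ k) z0)" using k by (metis tau_tau)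
  also have "\<dots> = (B ^^ k) ((B ^^ k) z0)" using k(2) funpow_tau[of k a z0] unfolding B_def by metis
  also have "\<dots> = (B ^^ (k + k)) z0" by (simp add: funpow_add)
  finally have kk: "(B ^^ (k + k)) z0 = z0" by simp
  show ?thesis
  proof (cases "k = 0")
    case True
    hence tz: "tau z0 = z0" using k by simp
    have tcj: "tau ((B ^^ m) z0) = (B ^^ m) z0" for m using tz by (simp add: B_def flip: funpow_tau)
    have fixC: "tau x = x" if "x \<in> C" for x using that tcj unfolding C_def cycle_of_def by auto
    have "tau ` C = id ` C" by (rule image_cong) (auto simp: fixC)
    hence tC: "tau ` C = C" by simp
    define K where "K = connected_component_set S w"
    have KS: "K \<subseteq> S" using K_def connected_component_subset by blast
    have wS: "w \<in> S" using w(2) K_def by (metis connected_component_eq_empty empty_iff)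
    have wK: "w \<in> K" using wS K_def by simp
    have S0: "0 \<notin> S"
    proof
      assume "0 \<in> S"
      hence "(blaschke a ^^ 0) 0 \<noteq> 0" using basin_no0[OF _ _ ep] c0 C_def B_def S_def by blast
      thus False by simp
    qed
    have tS: "tau ` K \<subseteq> S"
      using basin_tau[OF ep] c0 tC KS C_def B_def S_def by blast
    have "continuous_on K tau" unfolding tau_def using KS S0
      by (intro continuous_intros) auto
    hence "connected (tau ` K)" using connected_connected_component K_def
      by (metis connected_continuous_image)
    moreover have "w \<in> tau ` K" using wK fixC[OF w(1)] by (metis image_eqI)
    ultimately have "tau ` K \<subseteq> K" using tS K_def connected_component_maximal by metis
    hence "cm \<in> K" using cmtau w(2) K_def by blast
    hence "connected_component_set S cm = K" using K_def connected_component_eq by blast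
    moreover have "connected_component_set S cp = K" using w(2) K_def connected_component_eq by blast
    ultimately show ?thesis using assms(6) S_def cp_def cm_def by simp
  next
    case False
    have n2: "k + k = n"
    proof (rule ccontr)
      assume ne: "k + k \<noteq> n"
      show False
      proof (cases "k + k < n")
        case True thus False using ep False kk B_def by (simp add: exact_period_def)
      next
        case f2: False
        have e: "k + k = (k + k - n) + n" using f2 by simp
        have "(B ^^ ((k + k - n) + n)) z0 = (B ^^ (k + k - n)) ((B ^^ n) z0)"
          by (simp only: funpow_add o_apply)
        hence "(B ^^ (k + k)) z0 = (B ^^ (k + k - n)) ((B ^^ n) z0)" using e by metis
        hence "(B ^^ (k + k - n)) z0 = z0" using kk fx by simp
        thus False using ep f2 ne k B_def by (simp add: exact_period_def)
      qed
    qed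
    define g where "g = B ^^ k"
    have comm: "g (tau z) = tau (g z)" for z by (simp add: g_def B_def funpow_tau)
    have dz: "g field_differentiable at z0"
      unfolding g_def B_def by (rule iter_diff, rule polefree[OF ep z0])
    have dw: "g field_differentiable at (tau z0)"
      unfolding g_def B_def
    proof (rule iter_diff)
      fix j
      have "(blaschke a ^^ j) (tau z0) = (blaschke a ^^ (j + k)) z0"
        using k B_def by (simp add: funpow_add)
      thus "1 - cnj a * (blaschke a ^^ j) (tau z0) \<noteq> 0" using polefree[OF ep z0] by simp
    qed
    have gz: "g z0 = tau z0" using k g_def by simp
    have "multiplier (blaschke a) z0 n = deriv (g \<circ> g) z0"
      unfolding multiplier_def g_def B_def n2[symmetric] funpow_add ..
    also have "\<dots> = deriv g (g z0) * deriv g z0"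
      by (rule deriv_chain[OF dz]) (use dw gz in simp)
    also have "\<dots> = complex_of_real ((cmod (deriv g z0))^2 * (cmod z0)^4)"
      by (rule conj_mult[OF _ dz dw z0 gz]) (rule comm)
    finally show ?thesis by simp
  qed
qed


end
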